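(* Fix finite $\mathcal{S}$, $\mathcal{A}$, $d_0\in\Delta(\mathcal{S})$, $\gamma\in[0,1)$ and a reward $\mathcal{R}:\mathcal{S}\times\mathcal{A}\to[0,1]$. Let $\mathcal{T}\neq\mathcal{T}'$ be transition models and $\delta=\frac12\max_{s,a}\|\mathcal{T}(\cdot\mid s,a)-\mathcal{T}'(\cdot\mid s,a)\|_1>0$. For $\varepsilon>0$ define $$H(\varepsilon,\delta)=\frac{(1+\varepsilon)+\sqrt{(1-\varepsilon)^2+4\varepsilon/\delta}}{2}.$$ If $1/(1-\gamma)\le H(\varepsilon,\delta)$, then $(\mathcal{T},\mathcal{T}')$ is $\varepsilon$-unexploitable relative to every policy set $\Pi$ and the task $(\mathcal{S},\mathcal{A},\_,d_0,\mathcal{R},\gamma)$. Moreover, the bound is tight: for every $\delta\in(0,1]$, $\varepsilon>0$ and $\gamma$ with $1/(1-\gamma)>H(\varepsilon,\delta)$, there exist a task with reward in $[0,1]$ (namely $\mathcal{S}=\mathcal{A}=\{0,1\}$, $d_0(0)=1$, $\mathcal{R}(s,a)=\mathbb{1}\{s=0\}$) and transition models $\mathcal{T}_1,\mathcal{T}_2$ with $\frac12\max_{s,a}\|\mathcal{T}_1(\cdot\mid s,a)-\mathcal{T}_2(\cdot\mid s,a)\|_1=\delta$ that are $\varepsilon$-exploitable relative to the set of stationary policies; specifically, state $1$ absorbing under both, and at state $0$: under $\mathcal{T}_1$ action $0$ self-loops and action $1$ moves to state $1$ with probability $\delta$ (else stays), while under $\mathcal{T}_2$ the roles of the two actions ar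e swapped.
   Context: For a transition model $\mathcal{T}$ and policy $\pi$ (stationary, or non-stationary $\pi=(\pi_0,\pi_1,\dots)$), $J_{\mathcal{T}}(\pi)=\mathbb{E}\big[\sum_{t\ge0}\gamma^t\mathcal{R}(s_t,a_t)\big]$ with $s_0\sim d_0$, $a_t\sim\pi_t(\cdot\mid s_t)$, $s_{t+1}\sim\mathcal{T}(\cdot\mid s_t,a_t)$. A task is an MDP without transition model, $(\mathcal{S},\mathcal{A},\_,d_0,\mathcal{R},\gamma)$; a policy set is any set of such policies. $(\mathcal{T},\mathcal{T}')$ is $\varepsilon$-exploitable relative to $\Pi$ and a task if there exist $\pi,\pi'\in\Pi$ with $J_{\mathcal{T}}(\pi)-J_{\mathcal{T}}(\pi')>\varepsilon$ and $J_{\mathcal{T}'}(\pi')-J_{\mathcal{T}'}(\pi)>\varepsilon$; otherwise $\varepsilon$-unexploitable. *)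

theory Defs
  imports "HOL-Probability.Probability" "HOL-Library.Numeral_Type"
begin

type_synonym ('s,'a) trans = "'s \<Rightarrow> 'a \<Rightarrow> 's pmf"
type_synonym ('s,'a) policy = "nat \<Rightarrow> 's \<Rightarrow> 'a pmf"

primrec state_dist :: "('s,'a) trans \<Rightarrow> 's pmf \<Rightarrow> ('s,'a) policy \<Rightarrow> nat \<Rightarrow> 's pmf" where
  "state_dist T d0 \<pi> 0 = d0"
| "state_dist T d0 \<pi> (Suc t) =
     bind_pmf (state_dist T d0 \<pi> t) (\<lambda>s. bind_pmf (\<pi> t s) (\<lambda>a. T s a))"

text \<open>Expected discounted return: by linearity of expectation,
E[sum_t gamma^t R(s_t,a_t)] = sum_t gamma^t E[R(s_t,a_t)].\<close>
definition J :: "('s,'a) trans \<Rightarrow> 's pmf \<Rightarrow> ('s \<Rightarrow> 'a \<Rightarrow> real) \<Rightarrow> real \<Rightarrow> ('s,'a) policy \<Rightarrow> real" where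
  "J T d0 R \<gamma> \<pi> = (\<Sum>t. \<gamma> ^ t *
     measure_pmf.expectation (state_dist T d0 \<pi> t)
       (\<lambda>s. measure_pmf.expectation (\<pi> t s) (\<lambda>a. R s a)))"

definition exploitable ::
  "real \<Rightarrow> ('s,'a) policy set \<Rightarrow> 's pmf \<Rightarrow> ('s \<Rightarrow> 'a \<Rightarrow> real) \<Rightarrow> real
     \<Rightarrow> ('s,'a) trans \<Rightarrow> ('s,'a) trans \<Rightarrow> bool" where
  "exploitable \<epsilon> Pol d0 R \<gamma> T T' \<longleftrightarrow>
     (\<exists>\<pi>\<in>Pol. \<exists>\<pi>'\<in>Pol. J T d0 R \<gamma> \<pi> - J T d0 R \<gamma> \<pi>' > \<epsilon> \<and>
                     J T' d0 R \<gamma> \<pi>' - J T' d0 R \<gamma> \<pi> > \<epsilon>)"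

definition stationary_policies :: "('s,'a) policy set" where
  "stationary_policies = {\<pi>. \<forall>t. \<pi> t = \<pi> 0}"

definition model_dist :: "('s::finite,'a::finite) trans \<Rightarrow> ('s,'a) trans \<Rightarrow> real" where
  "model_dist T T' = (1/2) * Max {(\<Sum>s'\<in>UNIV. \<bar>pmf (T s a) s' - pmf (T' s a) s'\<bar>) | s a. True}"

definition H :: "real \<Rightarrow> real \<Rightarrow> real" where
  "H \<epsilon> \<delta> = ((1 + \<epsilon>) + sqrt ((1 - \<epsilon>)^2 + 4 * \<epsilon> / \<delta>)) / 2"

definition move_pmf :: "real \<Rightarrow> 2 pmf" where
  "move_pmf \<delta> = map_pmf (\<lambda>b. if b then 1 else 0) (bernoulli_pmf \<delta>)"

definition T1_ex :: "real \<Rightarrow> (2,2) trans" where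
  "T1_ex \<delta> s a = (if s = 1 then return_pmf 1
                   else if a = 0 then return_pmf 0 else move_pmf \<delta>)"

definition T2_ex :: "real \<Rightarrow> (2,2) trans" where
  "T2_ex \<delta> s a = (if s = 1 then return_pmf 1
                   else if a = 1 then return_pmf 0 else move_pmf \<delta>)"

definition d0_ex :: "2 pmf" where "d0_ex = return_pmf 0"

definition R_ex :: "2 \<Rightarrow> 2 \<Rightarrow> real" where "R_ex s a = (if s = 0 then 1 else 0)"

end

theory Submission
  imports Defs
begin
lemma exp_fin: "measure_pmf.expectation (M :: ('s::finite) pmf) f = (\<Sum>s\<in>UNIV. pmf M s * f s)"
  by (subst integral_measure_pmf_real[where A=UNIV]) (auto simp: mult.commute)
lemma sd_suc: "pmf (state_dist T d0 \<pi> (Suc t)) (s'::'s::finite) =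
   (\<Sum>s\<in>UNIV. pmf (state_dist T d0 \<pi> t) s * (\<Sum>a\<in>(UNIV::'a::finite set). pmf (\<pi> t s) a * pmf (T s a) s'))"
  by (simp add: pmf_bind exp_fin)
lemma sum1: "(\<Sum>s\<in>UNIV. pmf (M::('s::finite) pmf) s) = 1"
  by (rule sum_pmf_eq_1) auto

lemma mm3: "0 \<le> (m::real) \<Longrightarrow> m \<le> u \<Longrightarrow> 0 \<le> p \<Longrightarrow> 0 \<le> c \<Longrightarrow> c \<le> v \<Longrightarrow> m * p * c \<le> u * (p * v)"
proof -
  assume a: "0 \<le> m" "m \<le> u" "0 \<le> p" "0 \<le> c" "c \<le> v"
  have "m * p \<le> u * p" using a by (intro mult_right_mono)
  then have "m * p * c \<le> u * p * v" using a by (intro mult_mono) auto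
  then show ?thesis by (simp add: mult.assoc)
qed

definition ov :: "('s::finite) pmf \<Rightarrow> 's pmf \<Rightarrow> real" where
  "ov M N = (\<Sum>s\<in>UNIV. min (pmf M s) (pmf N s))"

lemma rew_diff:
  fixes M N :: "('s::finite) pmf"
  assumes "\<And>s. 0 \<le> r s" "\<And>s. r s \<le> 1"
  shows "(\<Sum>s\<in>UNIV. pmf M s * r s) - (\<Sum>s\<in>UNIV. pmf N s * r s) \<le> 1 - ov M N"
proof -
  have "(\<Sum>s\<in>UNIV. pmf M s * r s) - (\<Sum>s\<in>UNIV. pmf N s * r s)
      = (\<Sum>s\<in>UNIV. pmf M s * r s - pmf N s * r s)" by (simp add: sum_subtractf)
  also have "\<dots> \<le> (\<Sum>s\<in>UNIV. pmf M s - min (pmf M s) (pmf N s))"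
  proof (rule sum_mono)
    fix s
    have "pmf M s * r s - pmf N s * r s = (pmf M s - pmf N s) * r s" by (simp add: algebra_simps)
    then show "pmf M s * r s - pmf N s * r s \<le> pmf M s - min (pmf M s) (pmf N s)"
    proof (cases "pmf N s \<le> pmf M s")
      case True
      then have "(pmf M s - pmf N s) * r s \<le> (pmf M s - pmf N s)"
        using assms[of s] by (intro mult_left_le) auto
      then show ?thesis using True \<open>_ = (pmf M s - pmf N s) * r s\<close> by (simp add: min_def)
    next
      case False
      then have "(pmf M s - pmf N s) * r s \<le> 0"
        using assms[of s] by (intro mult_nonpos_nonneg) auto
      then show ?thesis using False \<open>_ = (pmf M s - pmf N s) * r s\<close> by (simp add: min_def)
    qed
  qed
  also have "\<dots> = 1 - ov M N" by (simp add: sum_subtractf sum1 ov_def)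
  finally show ?thesis .
qed

lemma ov_step:
  fixes T T' :: "('s::finite,'a::finite) trans"
  assumes hd: "\<And>s a. 1 - \<delta> \<le> (\<Sum>s'\<in>UNIV. min (pmf (T s a) s') (pmf (T' s a) s'))"
    and d1: "\<delta> \<le> 1"
  shows "(1 - \<delta>) * ov (state_dist T d0 \<pi> t) (state_dist T' d0 \<pi> t)
     \<le> ov (state_dist T d0 \<pi> (Suc t)) (state_dist T' d0 \<pi> (Suc t))"
proof -
  define \<mu> where "\<mu> = state_dist T d0 \<pi> t"
  define \<nu> where "\<nu> = state_dist T' d0 \<pi> t"
  define m where "m s = min (pmf \<mu> s) (pmf \<nu> s)" for s
  define c where "c s a s' = min (pmf (T s a) s') (pmf (T' s a) s')" for s a s'
  define L where "L s' = (\<Sum>s\<in>UNIV. \<Sum>a\<in>(UNIV::'a set). m s * pmf (\<pi> t s) a * c s a s')" for s'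
  have mnn: "0 \<le> m s" for s by (simp add: m_def)
  have cnn: "0 \<le> c s a s'" for s a s' by (simp add: c_def)
  have "(1 - \<delta>) * ov \<mu> \<nu> = (\<Sum>s\<in>UNIV. \<Sum>a\<in>(UNIV::'a set). m s * pmf (\<pi> t s) a * (1 - \<delta>))"
    by (simp add: ov_def m_def sum_distrib_left sum_distrib_right[symmetric] sum1 mult.commute
        flip: sum_distrib_left)
  also have "\<dots> \<le> (\<Sum>s\<in>UNIV. \<Sum>a\<in>(UNIV::'a set). m s * pmf (\<pi> t s) a * (\<Sum>s'\<in>UNIV. c s a s'))"
    by (intro sum_mono mult_left_mono) (auto simp: hd[unfolded c_def[symmetric]] mnn c_def[symmetric])
  also have "\<dots> = (\<Sum>s'\<in>UNIV. L s')"
    unfolding L_def sum_distrib_left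
    by (subst sum.swap, rule sum.cong, simp, subst sum.swap, simp add: mult.assoc)
  also have "\<dots> \<le> ov (state_dist T d0 \<pi> (Suc t)) (state_dist T' d0 \<pi> (Suc t))"
    unfolding ov_def
  proof (rule sum_mono)
    fix s'
    have "L s' \<le> pmf (state_dist T d0 \<pi> (Suc t)) s'"
      unfolding sd_suc L_def sum_distrib_left \<mu>_def[symmetric]
      by (intro sum_mono mm3) (simp_all add: m_def c_def)
    moreover have "L s' \<le> pmf (state_dist T' d0 \<pi> (Suc t)) s'"
      unfolding sd_suc L_def sum_distrib_left \<nu>_def[symmetric]
      by (intro sum_mono mm3) (simp_all add: m_def c_def)
    ultimately show "L s' \<le> min (pmf (state_dist T d0 \<pi> (Suc t)) s') (pmf (state_dist T' d0 \<pi> (Suc t)) s')"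
      by simp
  qed
  finally show ?thesis by (simp add: \<mu>_def \<nu>_def)
qed

lemma ov_bound:
  fixes T T' :: "('s::finite,'a::finite) trans"
  assumes hd: "\<And>s a. 1 - \<delta> \<le> (\<Sum>s'\<in>UNIV. min (pmf (T s a) s') (pmf (T' s a) s'))"
    and d0: "0 \<le> \<delta>" and d1: "\<delta> \<le> 1"
  shows "(1 - \<delta>) ^ t \<le> ov (state_dist T d0 \<pi> t) (state_dist T' d0 \<pi> t)"
proof (induction t)
  case 0
  then show ?case by (simp add: ov_def sum1)
next
  case (Suc t)
  have "(1 - \<delta>) ^ Suc t = (1 - \<delta>) * (1 - \<delta>) ^ t" by simp
  also have "\<dots> \<le> (1 - \<delta>) * ov (state_dist T d0 \<pi> t) (state_dist T' d0 \<pi> t)"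
    using Suc d1 by (intro mult_left_mono) auto
  also have "\<dots> \<le> ov (state_dist T d0 \<pi> (Suc t)) (state_dist T' d0 \<pi> (Suc t))"
    by (rule ov_step[OF hd d1])
  finally show ?case .
qed

lemma J_diff:
  fixes T T' :: "('s::finite,'a::finite) trans"
  assumes hd: "\<And>s a. 1 - \<delta> \<le> (\<Sum>s'\<in>UNIV. min (pmf (T s a) s') (pmf (T' s a) s'))"
    and d0: "0 \<le> \<delta>" and d1: "\<delta> \<le> 1"
    and g0: "0 \<le> \<gamma>" and g1: "\<gamma> < 1"
    and R: "\<forall>s a. 0 \<le> R s a \<and> R s a \<le> 1"
  shows "J T d0 R \<gamma> \<pi> - J T' d0 R \<gamma> \<pi> \<le> 1 / (1 - \<gamma>) - 1 / (1 - \<gamma> * (1 - \<delta>))"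
proof -
  define r where "r t s = (\<Sum>a\<in>UNIV. pmf (\<pi> t s) a * R s a)" for t s
  have r0: "0 \<le> r t s" for t s unfolding r_def using R by (intro sum_nonneg) auto
  have r1: "r t s \<le> 1" for t s
  proof -
    have "r t s \<le> (\<Sum>a\<in>UNIV. pmf (\<pi> t s) a)" unfolding r_def using R
      by (intro sum_mono) (auto intro: mult_left_le)
    then show ?thesis by (simp add: sum1)
  qed
  define e where "e T' t = (\<Sum>s\<in>UNIV. pmf (state_dist T' d0 \<pi> t) s * r t s)" for T' t
  have e0: "0 \<le> e T' t" for T' t unfolding e_def using r0 by (intro sum_nonneg) auto
  have e1: "e T' t \<le> 1" for T' t
  proof -
    have "e T' t \<le> (\<Sum>s\<in>UNIV. pmf (state_dist T' d0 \<pi> t) s)" unfolding e_def using r1 r0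
      by (intro sum_mono) (auto intro: mult_left_le)
    then show ?thesis by (simp add: sum1)
  qed
  have Jeq: "J T' d0 R \<gamma> \<pi> = (\<Sum>t. \<gamma> ^ t * e T' t)" for T'
    unfolding J_def e_def r_def by (simp add: exp_fin)
  have sg: "summable (\<lambda>t. \<gamma> ^ t)" using g0 g1 by (intro summable_geometric) auto
  have gdle: "\<gamma> * (1 - \<delta>) \<le> \<gamma>" using g0 d0 by (intro mult_left_le) auto
  have gd0: "0 \<le> \<gamma> * (1 - \<delta>)" using g0 d1 by simp
  have gda: "\<bar>\<gamma> * (1 - \<delta>)\<bar> < 1" using gdle gd0 g1 by linarith
  have sg2: "summable (\<lambda>t. (\<gamma> * (1 - \<delta>)) ^ t)" using gda
    by (intro summable_geometric) simp
  have se: "summable (\<lambda>t. \<gamma> ^ t * e T' t)" for T'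
    by (rule summable_comparison_test[OF _ sg]) (use g0 e0 e1 in \<open>auto intro!: mult_left_le simp: abs_mult\<close>)
  have "J T d0 R \<gamma> \<pi> - J T' d0 R \<gamma> \<pi> = (\<Sum>t. \<gamma> ^ t * e T t - \<gamma> ^ t * e T' t)"
    unfolding Jeq by (rule suminf_diff[OF se se])
  also have "\<dots> \<le> (\<Sum>t. \<gamma> ^ t - (\<gamma> * (1 - \<delta>)) ^ t)"
  proof (rule suminf_le)
    fix t
    have "e T t - e T' t \<le> 1 - ov (state_dist T d0 \<pi> t) (state_dist T' d0 \<pi> t)"
      unfolding e_def by (rule rew_diff) (auto simp: r0 r1)
    also have "\<dots> \<le> 1 - (1 - \<delta>) ^ t" using ov_bound[OF hd d0 d1] by simp
    finally have "\<gamma> ^ t * (e T t - e T' t) \<le> \<gamma> ^ t * (1 - (1 - \<delta>) ^ t)"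
      using g0 by (intro mult_left_mono) auto
    then show "\<gamma> ^ t * e T t - \<gamma> ^ t * e T' t \<le> \<gamma> ^ t - (\<gamma> * (1 - \<delta>)) ^ t"
      using power_mult_distrib[of \<gamma> "1 - \<delta>" t] by (simp add: right_diff_distrib del: power_mult_distrib)
  next
    show "summable (\<lambda>t. \<gamma> ^ t * e T t - \<gamma> ^ t * e T' t)" by (intro summable_diff se)
    show "summable (\<lambda>t. \<gamma> ^ t - (\<gamma> * (1 - \<delta>)) ^ t)" by (intro summable_diff sg sg2)
  qed
  also have "\<dots> = (\<Sum>t. \<gamma> ^ t) - (\<Sum>t. (\<gamma> * (1 - \<delta>)) ^ t)"
    by (rule suminf_diff[OF sg sg2, symmetric])
  also have "\<dots> = 1 / (1 - \<gamma>) - 1 / (1 - \<gamma> * (1 - \<delta>))"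
  proof -
    note gda
    moreover have "\<bar>\<gamma>\<bar> < 1" using g0 g1 by auto
    ultimately show ?thesis by (simp add: suminf_geometric)
  qed
  finally show ?thesis .
qed

lemma md_finite:
  fixes T T' :: "('s::finite,'a::finite) trans"
  shows "finite {(\<Sum>s'\<in>UNIV. \<bar>pmf (T s a) s' - pmf (T' s a) s'\<bar>) | s a. True}"
  (is "finite ?S")
proof -
  have "?S = (\<lambda>(s,a). (\<Sum>s'\<in>UNIV. \<bar>pmf (T s a) s' - pmf (T' s a) s'\<bar>)) ` UNIV" by auto
  then show ?thesis by simp
qed

lemma md_ge:
  fixes T T' :: "('s::finite,'a::finite) trans"
  shows "(\<Sum>s'\<in>UNIV. \<bar>pmf (T s a) s' - pmf (T' s a) s'\<bar>) \<le> 2 * model_dist T T'"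
proof -
  have "(\<Sum>s'\<in>UNIV. \<bar>pmf (T s a) s' - pmf (T' s a) s'\<bar>)
     \<le> Max {(\<Sum>s'\<in>UNIV. \<bar>pmf (T s a) s' - pmf (T' s a) s'\<bar>) | s a. True}"
    by (rule Max_ge[OF md_finite]) blast
  then show ?thesis unfolding model_dist_def by simp
qed

lemma l1_le2: "(\<Sum>s'\<in>UNIV. \<bar>pmf (p::('s::finite) pmf) s' - pmf q s'\<bar>) \<le> 2"
proof -
  have "(\<Sum>s'\<in>UNIV. \<bar>pmf p s' - pmf q s'\<bar>) \<le> (\<Sum>s'\<in>UNIV. pmf p s' + pmf q s')"
    by (intro sum_mono) (simp add: abs_le_iff)
  also have "\<dots> = 2" by (simp add: sum.distrib sum1)
  finally show ?thesis .
qed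

lemma md_le1:
  fixes T T' :: "('s::finite,'a::finite) trans"
  shows "model_dist T T' \<le> 1"
proof -
  let ?S = "{(\<Sum>s'\<in>UNIV. \<bar>pmf (T s a) s' - pmf (T' s a) s'\<bar>) | s a. True}"
  have "?S \<noteq> {}" by auto
  then have "Max ?S \<in> ?S" using md_finite[of T T'] by (rule Max_in[rotated])
  then have "Max ?S \<le> 2" using l1_le2 by auto
  then show ?thesis unfolding model_dist_def by simp
qed

lemma min_sum: "(\<Sum>s'\<in>UNIV. min (pmf (p::('s::finite) pmf) s') (pmf q s'))
   = 1 - (1/2) * (\<Sum>s'\<in>UNIV. \<bar>pmf p s' - pmf q s'\<bar>)"
proof -
  have "(\<Sum>s'\<in>UNIV. min (pmf p s') (pmf q s')) = (\<Sum>s'\<in>UNIV. (pmf p s' + pmf q s' - \<bar>pmf p s' - pmf q s'\<bar>) / 2)"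
    by (intro sum.cong) (auto simp: min_def)
  also have "\<dots> = 1 - (1/2) * (\<Sum>s'\<in>UNIV. \<bar>pmf p s' - pmf q s'\<bar>)"
    by (simp add: sum_divide_distrib[symmetric] sum.distrib sum_subtractf sum1)
  finally show ?thesis .
qed

lemma hd_md:
  fixes T T' :: "('s::finite,'a::finite) trans"
  shows "1 - model_dist T T' \<le> (\<Sum>s'\<in>UNIV. min (pmf (T s a) s') (pmf (T' s a) s'))"
  using md_ge[of T s a T'] by (simp add: min_sum)

lemma H_iff:
  fixes h \<epsilon> \<delta> :: real
  assumes h1: "1 \<le> h" and d: "0 < \<delta>" and e: "0 < \<epsilon>"
  shows "h \<le> H \<epsilon> \<delta> \<longleftrightarrow> \<delta> * (h - 1) * (h - \<epsilon>) \<le> \<epsilon>"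
proof -
  define S where "S = (1 - \<epsilon>)^2 + 4 * \<epsilon> / \<delta>"
  have S0: "0 \<le> S" unfolding S_def using d e by simp
  have HS: "h \<le> H \<epsilon> \<delta> \<longleftrightarrow> 2*h - 1 - \<epsilon> \<le> sqrt S" unfolding H_def S_def by (simp add: field_simps)
  have P: "\<delta> * (h - 1) * (h - \<epsilon>) \<le> \<epsilon> \<longleftrightarrow> (2*h - 1 - \<epsilon>)^2 \<le> S"
  proof -
    have "\<delta> * (h - 1) * (h - \<epsilon>) \<le> \<epsilon> \<longleftrightarrow> (h - 1) * (h - \<epsilon>) \<le> \<epsilon> / \<delta>"
      using d by (simp add: pos_le_divide_eq mult.commute mult.left_commute)
    also have "\<dots> \<longleftrightarrow> (2*h - 1 - \<epsilon>)^2 \<le> S"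
    proof -
      have "(2*h - 1 - \<epsilon>)^2 = 4 * ((h - 1) * (h - \<epsilon>)) + (1 - \<epsilon>)^2"
        by (simp add: power2_eq_square algebra_simps)
      moreover have "4 * \<epsilon> / \<delta> = 4 * (\<epsilon> / \<delta>)" by simp
      ultimately show ?thesis unfolding S_def by linarith
    qed
    finally show ?thesis .
  qed
  show ?thesis
  proof (cases "0 \<le> 2*h - 1 - \<epsilon>")
    case True
    have "2*h - 1 - \<epsilon> \<le> sqrt S \<longleftrightarrow> (2*h - 1 - \<epsilon>)^2 \<le> S"
      using True S0 by (metis real_le_rsqrt real_sqrt_le_iff real_sqrt_unique sqrt_le_D)
    then show ?thesis using HS P by simp
  next
    case False
    have "\<delta> * (h - 1) * (h - \<epsilon>) \<le> 0"
      using False h1 d by (intro mult_nonneg_nonpos) auto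
    then show ?thesis using HS False e S0 by (simp add: P[symmetric]) (smt (verit) real_sqrt_ge_zero)
  qed
qed

lemma D_iff:
  fixes \<gamma> \<epsilon> \<delta> :: real
  assumes g0: "0 \<le> \<gamma>" and g1: "\<gamma> < 1" and d: "0 < \<delta>" and d1: "\<delta> \<le> 1" and e: "0 < \<epsilon>"
  shows "1 / (1 - \<gamma>) - 1 / (1 - \<gamma> * (1 - \<delta>)) \<le> \<epsilon> \<longleftrightarrow> 1 / (1 - \<gamma>) \<le> H \<epsilon> \<delta>"
proof -
  define h where "h = 1 / (1 - \<gamma>)"
  have h1: "1 \<le> h" unfolding h_def using g0 g1 by simp
  have gh: "\<gamma> = (h - 1) / h" unfolding h_def using g1 by (simp add: field_simps)
  have hp: "0 < h" using h1 by simp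
  have den: "1 - \<gamma> * (1 - \<delta>) = (1 + (h - 1) * \<delta>) / h" unfolding gh using hp
    by (simp add: field_simps)
  have dp: "0 < 1 + (h - 1) * \<delta>" using h1 d by (smt (verit) mult_nonneg_nonneg)
  have "1 / (1 - \<gamma>) - 1 / (1 - \<gamma> * (1 - \<delta>)) = h * (h - 1) * \<delta> / (1 + (h - 1) * \<delta>)"
    unfolding den h_def[symmetric] using dp hp by (simp add: field_simps)
  then have "1 / (1 - \<gamma>) - 1 / (1 - \<gamma> * (1 - \<delta>)) \<le> \<epsilon> \<longleftrightarrow> h * (h - 1) * \<delta> \<le> \<epsilon> * (1 + (h - 1) * \<delta>)"
    using dp by (simp add: pos_divide_le_eq)
  also have "\<dots> \<longleftrightarrow> \<delta> * (h - 1) * (h - \<epsilon>) \<le> \<epsilon>" by (simp add: algebra_simps)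
  also have "\<dots> \<longleftrightarrow> h \<le> H \<epsilon> \<delta>" using H_iff[OF h1 d e] by simp
  finally show ?thesis unfolding h_def .
qed

lemma univ2: "(UNIV :: 2 set) = {0,1}"
proof -
  have "{0,1} \<subseteq> (UNIV :: 2 set)" by simp
  moreover have "card ({0,1} :: 2 set) = CARD(2)" by simp
  ultimately show ?thesis by (metis card_subset_eq finite)
qed

lemma pmf_move: "0 \<le> \<delta> \<Longrightarrow> \<delta> \<le> 1 \<Longrightarrow> pmf (move_pmf \<delta>) x = (if x = 1 then \<delta> else 1 - \<delta>)"
proof -
  assume a: "0 \<le> \<delta>" "\<delta> \<le> 1"
  have "pmf (move_pmf \<delta>) x = measure_pmf.prob (bernoulli_pmf \<delta>) ((\<lambda>b. if b then 1 else 0) -` {x})"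
    unfolding move_pmf_def by (rule pmf_map)
  moreover have "(\<lambda>b. if b then 1 else 0) -` {x} = (if x = (1::2) then {True} else {False})"
  proof -
    have n: "(0::2) \<noteq> 1" by simp
    have "x \<in> {0,1}" using univ2 by blast
    then show ?thesis using n by (cases "x = 1") (auto split: if_splits)
  qed
  ultimately show ?thesis using a by (simp add: measure_pmf_single)
qed

lemma pmf_move0: "0 \<le> \<delta> \<Longrightarrow> \<delta> \<le> 1 \<Longrightarrow> pmf (move_pmf \<delta>) 0 = 1 - \<delta>"
  by (simp add: pmf_move)
lemma pmf_move1: "0 \<le> \<delta> \<Longrightarrow> \<delta> \<le> 1 \<Longrightarrow> pmf (move_pmf \<delta>) 1 = \<delta>"
  by (simp add: pmf_move)

lemma sumret: "(\<Sum>a\<in>UNIV. pmf (return_pmf (a0::'a::finite)) a * f a) = (f a0 :: real)"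
  using exp_fin[of "return_pmf a0" f] by simp

lemma sd_ex:
  assumes "\<And>a. T 1 a = return_pmf 1"
  shows "pmf (state_dist T d0 (\<lambda>t s. return_pmf a0) (Suc t)) (0::2)
     = pmf (state_dist T d0 (\<lambda>t s. return_pmf (a0::2)) t) 0 * pmf (T 0 a0) 0"
  by (subst sd_suc) (simp only: sumret, simp add: univ2 assms)

lemma sd_pow:
  assumes "\<And>a. T 1 a = return_pmf 1"
  shows "pmf (state_dist T d0_ex (\<lambda>t s. return_pmf (a0::2)) t) (0::2) = (pmf (T 0 a0) 0) ^ t"
  by (induction t) (simp_all add: sd_ex[of T, OF assms] d0_ex_def del: state_dist.simps(2))

lemma J_ex:
  assumes "\<And>a. T 1 a = return_pmf 1" and "0 \<le> pmf (T 0 a0) 0" "0 \<le> \<gamma>" "\<gamma> < 1"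
  shows "J T d0_ex R_ex \<gamma> (\<lambda>t s. return_pmf (a0::2)) = 1 / (1 - \<gamma> * pmf (T 0 a0) 0)"
proof -
  let ?c = "pmf (T 0 a0) 0"
  have c1: "?c \<le> 1" by (rule pmf_le_1)
  have "J T d0_ex R_ex \<gamma> (\<lambda>t s. return_pmf (a0::2)) = (\<Sum>t. (\<gamma> * ?c) ^ t)"
    unfolding J_def exp_fin sumret by (simp add: univ2 R_ex_def sd_pow[of T, OF assms(1)] power_mult_distrib)
  also have "\<dots> = 1 / (1 - \<gamma> * ?c)"
  proof (rule suminf_geometric)
    have "\<gamma> * ?c \<le> \<gamma>" using assms c1 by (intro mult_left_le) auto
    moreover have "0 \<le> \<gamma> * ?c" using assms by simp
    ultimately show "norm (\<gamma> * ?c) < 1" using assms by simp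
  qed
  finally show ?thesis .
qed

theorem mainTheorem14:
  shows
   "(\<forall>(T :: ('s::finite,'a::finite) trans) T' (d0 :: 's pmf) (R :: 's \<Rightarrow> 'a \<Rightarrow> real) \<gamma> \<epsilon>
        (Pol :: ('s,'a) policy set).
       0 \<le> \<gamma> \<and> \<gamma> < 1 \<and> (\<forall>s a. 0 \<le> R s a \<and> R s a \<le> 1) \<and> T \<noteq> T' \<and>
       model_dist T T' > 0 \<and> \<epsilon> > 0 \<and> 1 / (1 - \<gamma>) \<le> H \<epsilon> (model_dist T T')
       \<longrightarrow> \<not> exploitable \<epsilon> Pol d0 R \<gamma> T T')
    \<and>
    (\<forall>\<delta> \<epsilon> \<gamma>. 0 < \<delta> \<and> \<delta> \<le> 1 \<and> \<epsilon> > 0 \<and> 0 \<le> \<gamma> \<and> \<gamma> < 1 \<and> 1 / (1 - \<gamma>) > H \<epsilon> \<delta>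
       \<longrightarrow> (\<forall>s a. 0 \<le> R_ex s a \<and> R_ex s a \<le> 1) \<and>
           model_dist (T1_ex \<delta>) (T2_ex \<delta>) = \<delta> \<and>
           exploitable \<epsilon> stationary_policies d0_ex R_ex \<gamma> (T1_ex \<delta>) (T2_ex \<delta>))"
proof (rule conjI; intro allI impI)
  fix T T' :: "('s::finite,'a::finite) trans" and d0 :: "'s pmf" and R :: "'s \<Rightarrow> 'a \<Rightarrow> real"
    and \<gamma> \<epsilon> :: real and Pol :: "('s,'a) policy set"
  assume A: "0 \<le> \<gamma> \<and> \<gamma> < 1 \<and> (\<forall>s a. 0 \<le> R s a \<and> R s a \<le> 1) \<and> T \<noteq> T' \<and>
       model_dist T T' > 0 \<and> \<epsilon> > 0 \<and> 1 / (1 - \<gamma>) \<le> H \<epsilon> (model_dist T T')"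
  define \<delta> where "\<delta> = model_dist T T'"
  have d0: "0 \<le> \<delta>" and dp: "0 < \<delta>" using A by (auto simp: \<delta>_def)
  have d1: "\<delta> \<le> 1" unfolding \<delta>_def by (rule md_le1)
  have hd: "1 - \<delta> \<le> (\<Sum>s'\<in>UNIV. min (pmf (T s a) s') (pmf (T' s a) s'))" for s a
    unfolding \<delta>_def by (rule hd_md)
  have hd': "1 - \<delta> \<le> (\<Sum>s'\<in>UNIV. min (pmf (T' s a) s') (pmf (T s a) s'))" for s a
    using hd[of s a] by (simp add: min.commute)
  have D: "1 / (1 - \<gamma>) - 1 / (1 - \<gamma> * (1 - \<delta>)) \<le> \<epsilon>"
    using D_iff[of \<gamma> \<delta> \<epsilon>] A dp d1 by (simp add: \<delta>_def)
  show "\<not> exploitable \<epsilon> Pol d0 R \<gamma> T T'"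
  proof
    assume "exploitable \<epsilon> Pol d0 R \<gamma> T T'"
    then obtain \<pi> \<pi>' where e1: "J T d0 R \<gamma> \<pi> - J T d0 R \<gamma> \<pi>' > \<epsilon>"
      and e2: "J T' d0 R \<gamma> \<pi>' - J T' d0 R \<gamma> \<pi> > \<epsilon>"
      unfolding exploitable_def by blast
    have "J T d0 R \<gamma> \<pi> - J T' d0 R \<gamma> \<pi> \<le> 1 / (1 - \<gamma>) - 1 / (1 - \<gamma> * (1 - \<delta>))"
      by (rule J_diff[OF hd d0 d1]) (use A in auto)
    moreover have "J T' d0 R \<gamma> \<pi>' - J T d0 R \<gamma> \<pi>' \<le> 1 / (1 - \<gamma>) - 1 / (1 - \<gamma> * (1 - \<delta>))"
      by (rule J_diff[OF hd' d0 d1]) (use A in auto)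
    ultimately show False using e1 e2 D by linarith
  qed
next
  fix \<delta> \<epsilon> \<gamma> :: real
  assume A: "0 < \<delta> \<and> \<delta> \<le> 1 \<and> \<epsilon> > 0 \<and> 0 \<le> \<gamma> \<and> \<gamma> < 1 \<and> 1 / (1 - \<gamma>) > H \<epsilon> \<delta>"
  then have d0: "0 \<le> \<delta>" and d1: "\<delta> \<le> 1" by auto
  have RR: "\<forall>s a. 0 \<le> R_ex s a \<and> R_ex s a \<le> 1" by (simp add: R_ex_def)
  have L1: "(\<Sum>s'\<in>UNIV. \<bar>pmf (T1_ex \<delta> s a) s' - pmf (T2_ex \<delta> s a) s'\<bar>) = (if s = 0 then 2 * \<delta> else 0)"
    for s a
  proof -
    have "s \<in> {0,1}" "a \<in> {0,1}" using univ2 by blast+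
    then show ?thesis using d0 d1 by (auto simp: T1_ex_def T2_ex_def univ2 pmf_move0 pmf_move1)
  qed
  let ?S = "{(\<Sum>s'\<in>UNIV. \<bar>pmf (T1_ex \<delta> s a) s' - pmf (T2_ex \<delta> s a) s'\<bar>) | s a. True}"
  have "Max ?S \<le> 2 * \<delta>"
    by (rule Max.boundedI[OF md_finite]) (auto simp: L1 d0)
  moreover have "2 * \<delta> \<le> Max ?S"
    by (rule Max_ge[OF md_finite]) (auto simp: L1 intro!: exI[of _ 0])
  ultimately have MD: "model_dist (T1_ex \<delta>) (T2_ex \<delta>) = \<delta>" unfolding model_dist_def by simp
  define \<pi>0 :: "(2,2) policy" where "\<pi>0 = (\<lambda>t s. return_pmf 0)"
  define \<pi>1 :: "(2,2) policy" where "\<pi>1 = (\<lambda>t s. return_pmf 1)"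
  have st: "\<pi>0 \<in> stationary_policies" "\<pi>1 \<in> stationary_policies"
    by (auto simp: stationary_policies_def \<pi>0_def \<pi>1_def)
  have J10: "J (T1_ex \<delta>) d0_ex R_ex \<gamma> \<pi>0 = 1 / (1 - \<gamma>)"
    unfolding \<pi>0_def using A by (subst J_ex) (auto simp: T1_ex_def)
  have J11: "J (T1_ex \<delta>) d0_ex R_ex \<gamma> \<pi>1 = 1 / (1 - \<gamma> * (1 - \<delta>))"
    unfolding \<pi>1_def using A by (subst J_ex) (auto simp: T1_ex_def pmf_move0)
  have J21: "J (T2_ex \<delta>) d0_ex R_ex \<gamma> \<pi>1 = 1 / (1 - \<gamma>)"
    unfolding \<pi>1_def using A by (subst J_ex) (auto simp: T2_ex_def)
  have J20: "J (T2_ex \<delta>) d0_ex R_ex \<gamma> \<pi>0 = 1 / (1 - \<gamma> * (1 - \<delta>))"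
    unfolding \<pi>0_def using A by (subst J_ex) (auto simp: T2_ex_def pmf_move0)
  have D: "\<epsilon> < 1 / (1 - \<gamma>) - 1 / (1 - \<gamma> * (1 - \<delta>))"
    using D_iff[of \<gamma> \<delta> \<epsilon>] A by force
  have "exploitable \<epsilon> stationary_policies d0_ex R_ex \<gamma> (T1_ex \<delta>) (T2_ex \<delta>)"
    unfolding exploitable_def using st D J10 J11 J21 J20 by force
  then show "(\<forall>s a. 0 \<le> R_ex s a \<and> R_ex s a \<le> 1) \<and>
           model_dist (T1_ex \<delta>) (T2_ex \<delta>) = \<delta> \<and>
           exploitable \<epsilon> stationary_policies d0_ex R_ex \<gamma> (T1_ex \<delta>) (T2_ex \<delta>)"
    using RR MD by blast
qed
end
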